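(* Let $G_1$ and $G_2$ be two vertex-disjoint simple connected graphs with $|V(G_1)|=n_1$, $|V(G_2)|=n_2$, $|E(G_1)|=m_1$, $|E(G_2)|=m_2$. Then the edge Q-join $G_1\underline{\vee}_Q G_2$ satisfies \[ F(G_1\underline{\vee}_Q G_2)=F(G_1)+F(G_2)+3n_2^{2}M_1(G_1)+3m_1M_1(G_2)+M_4(G_1)+3n_2\,HM(G_1)+3\,ReZM(G_1)+m_1^{2}(6m_2+m_1n_2)+m_1n_2^{3}. \]
   Context: For a simple graph $G$ and $v\in V(G)$, $d_G(v)$ is the degree of $v$. Define $M_1(G)=\sum_{v\in V(G)}d_G(v)^2$, $F(G)=\sum_{v\in V(G)}d_G(v)^3$, $M_4(G)=\sum_{v\in V(G)}d_G(v)^4$, $HM(G)=\sum_{uv\in E(G)}[d_G(u)+d_G(v)]^2$, and $ReZM(G)=\sum_{uv\in E(G)}d_G(u)d_G(v)\,[d_G(u)+d_G(v)]$. The graph $Q(G)$ is obtained from $G$ by inserting a new vertex into each edge of $G$ (subdividing it) and then joining by an edge each pair of new vertices that lie on adjacent edges of $G$ (edges sharing an end vertex); let $I(G)$ denote the set of these new vertices, so $V(Q(G))=V(G)\cup I(G)$. The edge Q-join $G_1\underline{\vee}_Q G_2$ is the graph obtained from $Q(G_1)$ and $G_2$ (taken vertex-disjoint) by joining each vertex of $I(G_1)$ to every vertex of $G_2$ by an edge. *)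

theory Defs
  imports Main
begin

definition simple_graph :: "'a set \<Rightarrow> 'a set set \<Rightarrow> bool" where
  "simple_graph V E \<longleftrightarrow> finite V \<and> (\<forall>e\<in>E. e \<subseteq> V \<and> card e = 2)"

definition connected_graph :: "'a set \<Rightarrow> 'a set set \<Rightarrow> bool" where
  "connected_graph V E \<longleftrightarrow> V \<noteq> {} \<and>
     (\<forall>u\<in>V. \<forall>v\<in>V. (\<lambda>x y. {x, y} \<in> E)\<^sup>*\<^sup>* u v)"

definition deg :: "'a set set \<Rightarrow> 'a \<Rightarrow> nat" where
  "deg E v = card {e \<in> E. v \<in> e}"

definition M1 :: "'a set \<Rightarrow> 'a set set \<Rightarrow> nat" where
  "M1 V E = (\<Sum>v\<in>V. deg E v ^ 2)"

definition Fidx :: "'a set \<Rightarrow> 'a set set \<Rightarrow> nat" where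
  "Fidx V E = (\<Sum>v\<in>V. deg E v ^ 3)"

definition M4 :: "'a set \<Rightarrow> 'a set set \<Rightarrow> nat" where
  "M4 V E = (\<Sum>v\<in>V. deg E v ^ 4)"

text \<open>For an edge e = {u,v}: d(u)+d(v) is the sum over e, d(u)d(v) the product over e.\<close>
definition HM :: "'a set set \<Rightarrow> nat" where
  "HM E = (\<Sum>e\<in>E. (\<Sum>v\<in>e. deg E v) ^ 2)"

definition ReZM :: "'a set set \<Rightarrow> nat" where
  "ReZM E = (\<Sum>e\<in>E. (\<Prod>v\<in>e. deg E v) * (\<Sum>v\<in>e. deg E v))"

text \<open>Q(G): old vertices are Inl v, new (inserted) vertices are Inr e for e an edge.\<close>
definition QV :: "'a set \<Rightarrow> 'a set set \<Rightarrow> ('a + 'a set) set" where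
  "QV V E = Inl ` V \<union> Inr ` E"

definition QE :: "'a set set \<Rightarrow> ('a + 'a set) set set" where
  "QE E = {{Inl u, Inr e} | u e. e \<in> E \<and> u \<in> e}
        \<union> {{Inr e, Inr f} | e f. e \<in> E \<and> f \<in> E \<and> e \<noteq> f \<and> e \<inter> f \<noteq> {}}"

text \<open>Edge Q-join of G1 = (V1,E1) and G2 = (V2,E2); the two parts are made
vertex-disjoint by tagging with Inl / Inr.\<close>
definition QjoinV :: "'a set \<Rightarrow> 'a set set \<Rightarrow> 'b set \<Rightarrow> (('a + 'a set) + 'b) set" where
  "QjoinV V1 E1 V2 = Inl ` QV V1 E1 \<union> Inr ` V2"

definition QjoinE :: "'a set set \<Rightarrow> 'b set \<Rightarrow> 'b set set \<Rightarrow> (('a + 'a set) + 'b) set set" where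
  "QjoinE E1 V2 E2 = (\<lambda>e. Inl ` e) ` QE E1 \<union> (\<lambda>e. Inr ` e) ` E2
        \<union> {{Inl (Inr e), Inr w} | e w. e \<in> E1 \<and> w \<in> V2}"

end

theory Submission
  imports Defs
begin

lemma dc:
  fixes f :: "'a \<Rightarrow> nat"
  assumes "finite V" "finite E" "\<forall>e\<in>E. e \<subseteq> V"
  shows "(\<Sum>e\<in>E. \<Sum>v\<in>e. f v) = (\<Sum>v\<in>V. deg E v * f v)"
proof -
  have "(\<Sum>e\<in>E. \<Sum>v\<in>e. f v) = (\<Sum>e\<in>E. \<Sum>v\<in>{v\<in>V. v\<in>e}. f v)"
  proof (rule sum.cong)
    fix e assume "e \<in> E"
    then have "{v\<in>V. v\<in>e} = e" using assms(3) by auto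
    then show "sum f e = sum f {v\<in>V. v\<in>e}" by simp
  qed simp
  also have "\<dots> = (\<Sum>v\<in>V. \<Sum>e\<in>{e\<in>E. v\<in>e}. f v)"
    by (rule sum.swap_restrict[OF assms(2,1)])
  also have "\<dots> = (\<Sum>v\<in>V. deg E v * f v)" by (simp add: deg_def)
  finally show ?thesis .
qed

lemma img2: "f ` {g u e | u e. P u e} = {f (g u e) | u e. P u e}" by blast

lemma QjoinE_alt:
  "QjoinE E1 V2 E2 = {{Inl(Inl u), Inl(Inr e)} | u e. e\<in>E1 \<and> u\<in>e}
     \<union> {{Inl(Inr e), Inl(Inr f)} | e f. e \<in> E1 \<and> f \<in> E1 \<and> e \<noteq> f \<and> e \<inter> f \<noteq> {}}
     \<union> (\<lambda>e. Inr ` e) ` E2 \<union> {{Inl (Inr e), Inr w} | e w. e \<in> E1 \<and> w \<in> V2}"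
  unfolding QjoinE_def QE_def image_Un img2 by simp

lemma deg_old:
  "{x \<in> QjoinE E1 V2 E2. Inl (Inl v) \<in> x} = (\<lambda>e. {Inl (Inl v), Inl (Inr e)}) ` {e\<in>E1. v\<in>e}"
  unfolding QjoinE_alt by auto

lemma deg_old':
  fixes E1 :: "'a set set" and V2 :: "'b set"
  shows "deg (QjoinE E1 V2 E2) (Inl (Inl v)) = deg E1 v"
proof -
  have "inj_on (\<lambda>e. {Inl (Inl v), Inl (Inr e)} :: (('a + 'a set) + 'b) set) {e\<in>E1. v\<in>e}"
    by (auto simp: inj_on_def doubleton_eq_iff)
  then show ?thesis unfolding deg_def deg_old by (simp add: card_image)
qed

lemma deg_G2:
  assumes "w \<in> V2"
  shows "{x \<in> QjoinE E1 V2 E2. Inr w \<in> x} = (\<lambda>e. Inr ` e) ` {e\<in>E2. w\<in>e} \<union> (\<lambda>e. {Inl (Inr e), Inr w}) ` E1"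
  using assms unfolding QjoinE_alt by auto

lemma deg_G2':
  fixes E1 :: "'a set set" and V2 :: "'b set"
  assumes "w \<in> V2" "finite E1" "finite E2"
  shows "deg (QjoinE E1 V2 E2) (Inr w) = deg E2 w + card E1"
proof -
  have i1: "inj_on (\<lambda>e. Inr ` e :: (('a + 'a set) + 'b) set) {e\<in>E2. w\<in>e}"
    by (auto simp: inj_on_def inj_image_eq_iff)
  have i2: "inj_on (\<lambda>e. {Inl (Inr e), Inr w} :: (('a + 'a set) + 'b) set) E1"
    by (auto simp: inj_on_def doubleton_eq_iff)
  have dj: "(\<lambda>e. Inr ` e :: (('a + 'a set) + 'b) set) ` {e\<in>E2. w\<in>e} \<inter> (\<lambda>e. {Inl (Inr e), Inr w}) ` E1 = {}"
    by auto
  show ?thesis unfolding deg_def deg_G2[OF assms(1)]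
    using assms(2,3) i1 i2 dj by (simp add: card_Un_disjoint card_image)
qed

lemma cases4:
  assumes "x \<in> QjoinE E1 V2 E2"
  shows "(\<exists>u e'. x = {Inl(Inl u), Inl(Inr e')} \<and> e'\<in>E1 \<and> u\<in>e')
   \<or> (\<exists>e1 f. x = {Inl(Inr e1), Inl(Inr f)} \<and> e1 \<in> E1 \<and> f \<in> E1 \<and> e1 \<noteq> f \<and> e1 \<inter> f \<noteq> {})
   \<or> (\<exists>g\<in>E2. x = Inr ` g)
   \<or> (\<exists>e' w. x = {Inl (Inr e'), Inr w} \<and> e'\<in>E1 \<and> w \<in> V2)"
  using assms unfolding QjoinE_alt by (simp only: Un_iff mem_Collect_eq image_iff disj_assoc)

lemma cases4E:
  assumes "x \<in> QjoinE E1 V2 E2"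
  obtains (A) u e' where "x = {Inl(Inl u), Inl(Inr e')}" "e'\<in>E1" "u\<in>e'"
   | (B) e1 f where "x = {Inl(Inr e1), Inl(Inr f)}" "e1 \<in> E1" "f \<in> E1" "e1 \<noteq> f" "e1 \<inter> f \<noteq> {}"
   | (C) g where "g \<in> E2" "x = Inr ` g"
   | (D) e' w where "x = {Inl (Inr e'), Inr w}" "e'\<in>E1" "w \<in> V2"
  using cases4[OF assms] by (elim disjE exE conjE bexE) (rule that; assumption)+

lemma qj1: "e\<in>E1 \<Longrightarrow> u\<in>e \<Longrightarrow> {Inl(Inl u), Inl(Inr e)} \<in> QjoinE E1 V2 E2"
  unfolding QjoinE_alt
  apply (rule UnI1, rule UnI1, rule UnI1, rule CollectI)
  apply (rule exI[of _ u], rule exI[of _ e])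
  by simp
lemma qj2: "e\<in>E1 \<Longrightarrow> f\<in>E1 \<Longrightarrow> e \<noteq> f \<Longrightarrow> e \<inter> f \<noteq> {} \<Longrightarrow> {Inl(Inr e), Inl(Inr f)} \<in> QjoinE E1 V2 E2"
  unfolding QjoinE_alt
  apply (rule UnI1, rule UnI1, rule UnI2, rule CollectI)
  apply (rule exI[of _ e], rule exI[of _ f])
  by simp
lemma qj4: "e\<in>E1 \<Longrightarrow> w\<in>V2 \<Longrightarrow> {Inl(Inr e), Inr w} \<in> QjoinE E1 V2 E2"
  unfolding QjoinE_alt
  apply (rule UnI2, rule CollectI)
  apply (rule exI[of _ e], rule exI[of _ w])
  by simp

lemma deg_new_sub:
  assumes "e \<in> E1"
  shows "{x \<in> QjoinE E1 V2 E2. Inl (Inr e) \<in> x} \<subseteq>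
     (\<lambda>u. {Inl (Inl u), Inl (Inr e)}) ` e
   \<union> (\<lambda>f. {Inl (Inr e), Inl (Inr f)}) ` {f\<in>E1. f\<noteq>e \<and> f\<inter>e\<noteq>{}}
   \<union> (\<lambda>w. {Inl (Inr e), Inr w}) ` V2" (is "_ \<subseteq> ?R")
proof
  fix x assume x: "x \<in> {x \<in> QjoinE E1 V2 E2. Inl (Inr e) \<in> x}"
  then have xin: "x \<in> QjoinE E1 V2 E2" and ex: "Inl (Inr e) \<in> x" by auto
  from xin show "x \<in> ?R"
  proof (cases rule: cases4E)
    case A then show ?thesis using ex by auto
  next
    case (B e1 f)
    show ?thesis
    proof (cases "e1 = e")
      case True
      then have "x = {Inl (Inr e), Inl (Inr f)}" "f \<in> {f\<in>E1. f\<noteq>e \<and> f\<inter>e\<noteq>{}}"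
        using B by (auto simp: Int_commute)
      then show ?thesis by blast
    next
      case False
      then have "f = e" using B ex by auto
      then have "x = {Inl (Inr e), Inl (Inr e1)}" "e1 \<in> {f\<in>E1. f\<noteq>e \<and> f\<inter>e\<noteq>{}}"
        using B by auto
      then show ?thesis by blast
    qed
  next
    case C then show ?thesis using ex by auto
  next
    case D then show ?thesis using ex by auto
  qed
qed

lemma deg_new:
  fixes E1 :: "'a set set" and V2 :: "'b set"
  assumes "e \<in> E1"
  shows "{x \<in> QjoinE E1 V2 E2. Inl (Inr e) \<in> x} =
     (\<lambda>u. {Inl (Inl u), Inl (Inr e)}) ` e
   \<union> (\<lambda>f. {Inl (Inr e), Inl (Inr f)}) ` {f\<in>E1. f\<noteq>e \<and> f\<inter>e\<noteq>{}}
   \<union> (\<lambda>w. {Inl (Inr e), Inr w}) ` V2" (is "?L = ?R")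
proof (rule equalityI)
  show "?L \<subseteq> ?R" by (rule deg_new_sub[OF assms])
next
  show "?R \<subseteq> ?L"
  proof
    fix x assume "x \<in> ?R"
    then consider (a) u where "u \<in> e" "x = {Inl (Inl u), Inl (Inr e)}"
      | (b) f where "f \<in> E1" "f \<noteq> e" "f \<inter> e \<noteq> {}" "x = {Inl (Inr e), Inl (Inr f)}"
      | (c) w where "w \<in> V2" "x = {Inl (Inr e), Inr w}" by blast
    then show "x \<in> ?L"
    proof cases
      case a then show ?thesis using qj1[OF assms a(1), of V2 E2] by simp
    next
      case b
      have "e \<inter> f \<noteq> {}" using b(3) by (simp add: Int_commute)
      then show ?thesis using qj2[OF assms b(1) b(2)[symmetric], of V2 E2] b(4) by simp
    next
      case c then show ?thesis using qj4[OF assms c(1), of E2] by simp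
    qed
  qed
qed

lemma nbr_card:
  assumes E: "\<forall>f\<in>E1. card f = 2" "finite E1" and e: "e \<in> E1"
  shows "card {f\<in>E1. f\<noteq>e \<and> f\<inter>e\<noteq>{}} + 2 = (\<Sum>v\<in>e. deg E1 v)"
proof -
  obtain a b where ab: "a \<noteq> b" "e = {a, b}" using E(1) e by (meson card_2_iff)
  have eq: "{f\<in>E1. f\<noteq>e \<and> f\<inter>e\<noteq>{}} = ({f\<in>E1. a\<in>f} - {e}) \<union> ({f\<in>E1. b\<in>f} - {e})"
    using ab by auto
  have dj: "({f\<in>E1. a\<in>f} - {e}) \<inter> ({f\<in>E1. b\<in>f} - {e}) = {}"
  proof (rule ccontr)
    assume "\<not> ?thesis"
    then obtain f where f: "f \<in> E1" "a \<in> f" "b \<in> f" "f \<noteq> e" by auto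
    have "card f = 2" using E(1) f(1) by auto
    moreover have "{a, b} \<subseteq> f" using f by auto
    moreover have "finite f" using \<open>card f = 2\<close> card.infinite by fastforce
    ultimately have "f = {a, b}" using ab(1)
      by (metis card_2_iff card_subset_eq finite.emptyI finite.insertI)
    then show False using f(4) ab(2) by simp
  qed
  have fa: "finite {f\<in>E1. a\<in>f}" "finite {f\<in>E1. b\<in>f}" using E(2) by auto
  have ca: "card ({f\<in>E1. a\<in>f} - {e}) + 1 = deg E1 a"
    unfolding deg_def using fa(1) e ab(2) card_Diff_singleton[of _ e]
    by (metis (mono_tags, lifting) card_Diff1_le card_Suc_Diff1 insertI1 mem_Collect_eq Suc_eq_plus1)
  have cb: "card ({f\<in>E1. b\<in>f} - {e}) + 1 = deg E1 b"
    unfolding deg_def using fa(2) e ab(2)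
    by (metis (mono_tags, lifting) card_Suc_Diff1 insertI1 insert_commute mem_Collect_eq Suc_eq_plus1)
  have "card {f\<in>E1. f\<noteq>e \<and> f\<inter>e\<noteq>{}} = card ({f\<in>E1. a\<in>f} - {e}) + card ({f\<in>E1. b\<in>f} - {e})"
    unfolding eq using fa dj by (simp add: card_Un_disjoint)
  then show ?thesis using ca cb ab by simp
qed

lemma deg_new':
  fixes E1 :: "'a set set" and V2 :: "'b set"
  assumes E: "\<forall>f\<in>E1. card f = 2" "finite E1" "finite V2" and e: "e \<in> E1"
  shows "deg (QjoinE E1 V2 E2) (Inl (Inr e)) = (\<Sum>v\<in>e. deg E1 v) + card V2"
proof -
  let ?N = "{f\<in>E1. f\<noteq>e \<and> f\<inter>e\<noteq>{}}"
  let ?A = "(\<lambda>u. {Inl (Inl u), Inl (Inr e)}) ` e :: (('a + 'a set) + 'b) set set"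
  let ?B = "(\<lambda>f. {Inl (Inr e), Inl (Inr f)}) ` ?N :: (('a + 'a set) + 'b) set set"
  let ?C = "(\<lambda>w. {Inl (Inr e), Inr w}) ` V2 :: (('a + 'a set) + 'b) set set"
  have fe: "finite e" "card e = 2" using E(1) e card.infinite by fastforce+
  have fN: "finite ?N" using E(2) by auto
  have cA: "card ?A = 2"
    using fe by (subst card_image) (auto simp: inj_on_def doubleton_eq_iff)
  have cB: "card ?B = card ?N"
    by (subst card_image) (auto simp: inj_on_def doubleton_eq_iff)
  have cC: "card ?C = card V2"
    by (subst card_image) (auto simp: inj_on_def doubleton_eq_iff)
  have d1: "?A \<inter> ?B = {}" by (auto simp: doubleton_eq_iff)
  have d2: "(?A \<union> ?B) \<inter> ?C = {}" by (auto simp: doubleton_eq_iff)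
  have "deg (QjoinE E1 V2 E2) (Inl (Inr e)) = card (?A \<union> ?B \<union> ?C)"
    unfolding deg_def deg_new[OF e] ..
  also have "\<dots> = card ?A + card ?B + card ?C"
    using d1 d2 fe(1) fN E(3) by (simp add: card_Un_disjoint)
  also have "\<dots> = (\<Sum>v\<in>e. deg E1 v) + card V2"
    using cA cB cC nbr_card[OF E(1,2) e] by simp
  finally show ?thesis .
qed

lemma cube_pair:
  fixes d :: "'a \<Rightarrow> nat"
  assumes "card e = 2"
  shows "(\<Sum>v\<in>e. d v) ^ 3 = (\<Sum>v\<in>e. d v ^ 3) + 3 * ((\<Prod>v\<in>e. d v) * (\<Sum>v\<in>e. d v))"
proof -
  obtain a b where ab: "a \<noteq> b" "e = {a, b}" using assms by (meson card_2_iff)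
  show ?thesis using ab by (simp add: power3_eq_cube algebra_simps)
qed

lemma cube_shift:
  fixes g :: "'a \<Rightarrow> nat"
  shows "(\<Sum>x\<in>A. (g x + c) ^ 3) = (\<Sum>x\<in>A. g x ^ 3) + 3 * c * (\<Sum>x\<in>A. g x ^ 2)
     + 3 * c^2 * (\<Sum>x\<in>A. g x) + card A * c ^ 3"
proof -
  have "(\<Sum>x\<in>A. (g x + c) ^ 3) = (\<Sum>x\<in>A. g x ^ 3 + 3 * c * g x ^ 2 + 3 * c^2 * g x + c ^ 3)"
    by (rule sum.cong) (simp_all add: power3_eq_cube power2_eq_square algebra_simps)
  also have "\<dots> = (\<Sum>x\<in>A. g x ^ 3) + 3 * c * (\<Sum>x\<in>A. g x ^ 2)
     + 3 * c^2 * (\<Sum>x\<in>A. g x) + card A * c ^ 3"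
    by (simp add: sum.distrib sum_distrib_left)
  finally show ?thesis .
qed

lemma sum3:
  fixes g :: "(('a + 'a set) + 'b) \<Rightarrow> nat"
  assumes "finite V1" "finite E1" "finite V2"
  shows "(\<Sum>x\<in>(\<lambda>v. Inl (Inl v)) ` V1 \<union> (\<lambda>e. Inl (Inr e)) ` E1 \<union> Inr ` V2. g x)
    = (\<Sum>v\<in>V1. g (Inl (Inl v))) + (\<Sum>e\<in>E1. g (Inl (Inr e))) + (\<Sum>w\<in>V2. g (Inr w))"
proof -
  have d1: "(\<lambda>v. Inl (Inl v)) ` V1 \<inter> (\<lambda>e. Inl (Inr e)) ` E1 = ({} :: (('a + 'a set) + 'b) set)" by auto
  have d2: "((\<lambda>v. Inl (Inl v)) ` V1 \<union> (\<lambda>e. Inl (Inr e)) ` E1) \<inter> Inr ` V2 = ({} :: (('a + 'a set) + 'b) set)" by auto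
  have "(\<Sum>x\<in>(\<lambda>v. Inl (Inl v)) ` V1 \<union> (\<lambda>e. Inl (Inr e)) ` E1 \<union> Inr ` V2. g x)
     = (\<Sum>x\<in>(\<lambda>v. Inl (Inl v)) ` V1. g x) + (\<Sum>x\<in>(\<lambda>e. Inl (Inr e)) ` E1. g x) + (\<Sum>x\<in>Inr ` V2. g x)"
    using assms d1 d2 by (simp add: sum.union_disjoint)
  also have "(\<Sum>x\<in>(\<lambda>v. Inl (Inl v)) ` V1. g x) = (\<Sum>v\<in>V1. g (Inl (Inl v)))"
    by (rule sum.reindex_cong[where l="\<lambda>v. Inl (Inl v)"]) (auto simp: inj_on_def)
  also have "(\<Sum>x\<in>(\<lambda>e. Inl (Inr e)) ` E1. g x) = (\<Sum>e\<in>E1. g (Inl (Inr e)))"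
    by (rule sum.reindex_cong[where l="\<lambda>v. Inl (Inr v)"]) (auto simp: inj_on_def)
  also have "(\<Sum>x\<in>Inr ` V2. g x) = (\<Sum>w\<in>V2. g (Inr w))"
    by (rule sum.reindex_cong[where l="Inr"]) (auto simp: inj_on_def)
  finally show ?thesis .
qed

lemma final_alg:
  fixes F1 S3 m1 n2 m2 M1a HMa M4a Rz F2 M12 :: nat
  assumes "S3 = M4a + 3 * Rz"
  shows "F1 + (S3 + 3 * n2 * HMa + 3 * n2^2 * M1a + m1 * n2 ^ 3)
     + (F2 + 3 * m1 * M12 + 3 * m1^2 * (2 * m2) + n2 * m1 ^ 3) =
     F1 + F2 + 3 * n2 ^ 2 * M1a + 3 * m1 * M12 + M4a + 3 * n2 * HMa + 3 * Rz
      + m1 ^ 2 * (6 * m2 + m1 * n2) + m1 * n2 ^ 3"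
  using assms by (simp add: power2_eq_square power3_eq_cube algebra_simps)

theorem theorem6:
  fixes V1 :: "'a set" and E1 :: "'a set set" and V2 :: "'b set" and E2 :: "'b set set"
  assumes "simple_graph V1 E1" and "connected_graph V1 E1"
    and "simple_graph V2 E2" and "connected_graph V2 E2"
  shows "Fidx (QjoinV V1 E1 V2) (QjoinE E1 V2 E2) =
      Fidx V1 E1 + Fidx V2 E2 + 3 * card V2 ^ 2 * M1 V1 E1 + 3 * card E1 * M1 V2 E2
      + M4 V1 E1 + 3 * card V2 * HM E1 + 3 * ReZM E1
      + card E1 ^ 2 * (6 * card E2 + card E1 * card V2) + card E1 * card V2 ^ 3"
proof -
  let ?J = "QjoinE E1 V2 E2"
  let ?d = "deg E1" and ?d2 = "deg E2"
  let ?s = "\<lambda>e. \<Sum>v\<in>e. deg E1 v"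
  have fV1: "finite V1" and sub1: "\<forall>e\<in>E1. e \<subseteq> V1" and c1: "\<forall>e\<in>E1. card e = 2"
    using assms(1) unfolding simple_graph_def by auto
  have fV2: "finite V2" and sub2: "\<forall>e\<in>E2. e \<subseteq> V2" and c2: "\<forall>e\<in>E2. card e = 2"
    using assms(3) unfolding simple_graph_def by auto
  have fE1: "finite E1" using fV1 sub1 by (meson Pow_iff finite_Pow_iff rev_finite_subset subsetI)
  have fE2: "finite E2" using fV2 sub2 by (meson Pow_iff finite_Pow_iff rev_finite_subset subsetI)
  have QV: "QjoinV V1 E1 V2 = (\<lambda>v. Inl (Inl v)) ` V1 \<union> (\<lambda>e. Inl (Inr e)) ` E1 \<union> Inr ` V2"
    unfolding QjoinV_def QV_def image_Un image_image by simp
  have "Fidx (QjoinV V1 E1 V2) ?J = (\<Sum>v\<in>V1. deg ?J (Inl (Inl v)) ^ 3)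
     + (\<Sum>e\<in>E1. deg ?J (Inl (Inr e)) ^ 3) + (\<Sum>w\<in>V2. deg ?J (Inr w) ^ 3)"
    unfolding Fidx_def QV by (rule sum3[OF fV1 fE1 fV2])
  also have "\<dots> = Fidx V1 E1 + (\<Sum>e\<in>E1. (?s e + card V2) ^ 3) + (\<Sum>w\<in>V2. (?d2 w + card E1) ^ 3)"
  proof -
    have a: "(\<Sum>v\<in>V1. deg ?J (Inl (Inl v)) ^ 3) = Fidx V1 E1"
      unfolding Fidx_def deg_old' ..
    have b: "(\<Sum>e\<in>E1. deg ?J (Inl (Inr e)) ^ 3) = (\<Sum>e\<in>E1. (?s e + card V2) ^ 3)"
    proof (rule sum.cong[OF refl])
      fix e assume "e \<in> E1"
      then show "deg ?J (Inl (Inr e)) ^ 3 = (?s e + card V2) ^ 3"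
        by (subst deg_new'[OF c1 fE1 fV2]) (assumption, rule refl)
    qed
    have c: "(\<Sum>w\<in>V2. deg ?J (Inr w) ^ 3) = (\<Sum>w\<in>V2. (?d2 w + card E1) ^ 3)"
    proof (rule sum.cong[OF refl])
      fix w assume "w \<in> V2"
      then show "deg ?J (Inr w) ^ 3 = (?d2 w + card E1) ^ 3"
        by (subst deg_G2'[OF _ fE1 fE2]) (assumption, rule refl)
    qed
    show ?thesis using a b c by argo
  qed
  finally have F: "Fidx (QjoinV V1 E1 V2) ?J = Fidx V1 E1 + (\<Sum>e\<in>E1. (?s e + card V2) ^ 3) + (\<Sum>w\<in>V2. (?d2 w + card E1) ^ 3)" .
  have H1: "(\<Sum>e\<in>E1. ?s e) = M1 V1 E1"
    unfolding M1_def using dc[OF fV1 fE1 sub1, of ?d] by (simp add: power2_eq_square)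
  have H2: "(\<Sum>e\<in>E1. ?s e ^ 2) = HM E1" unfolding HM_def ..
  have H3: "(\<Sum>e\<in>E1. ?s e ^ 3) = M4 V1 E1 + 3 * ReZM E1"
  proof -
    have "(\<Sum>e\<in>E1. ?s e ^ 3) = (\<Sum>e\<in>E1. (\<Sum>v\<in>e. ?d v ^ 3) + 3 * ((\<Prod>v\<in>e. ?d v) * ?s e))"
      using c1 by (intro sum.cong refl cube_pair) auto
    also have "\<dots> = (\<Sum>e\<in>E1. \<Sum>v\<in>e. ?d v ^ 3) + 3 * ReZM E1"
      unfolding ReZM_def by (simp add: sum.distrib sum_distrib_left)
    also have "(\<Sum>e\<in>E1. \<Sum>v\<in>e. ?d v ^ 3) = M4 V1 E1"
      unfolding M4_def dc[OF fV1 fE1 sub1, of "\<lambda>v. ?d v ^ 3"]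
      by (rule sum.cong) (simp_all add: power4_eq_xxxx power3_eq_cube)
    finally show ?thesis .
  qed
  have H4: "(\<Sum>w\<in>V2. ?d2 w) = 2 * card E2"
  proof -
    have "(\<Sum>w\<in>V2. ?d2 w) = (\<Sum>e\<in>E2. \<Sum>v\<in>e. (1::nat))"
      using dc[OF fV2 fE2 sub2, of "\<lambda>_. 1"] by simp
    also have "\<dots> = (\<Sum>e\<in>E2. 2)" using c2 by (intro sum.cong) auto
    finally show ?thesis by simp
  qed
  show ?thesis
    unfolding F cube_shift H1 H2 H4
    unfolding Fidx_def[of V2] M1_def[of V2]
    by (rule final_alg[OF H3])
qed

end
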